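(* Let $M_t\ge 1$, $\nu\ge 0$, $d\in\{1,\dots,M_t\}$ be integers and set $R=M_t-d+1$. If $T\ge (2^R-1)\nu+(2^R-1)(\nu+1)\big((M_t-2)(2^R-1)+R\big)$, then there exists a set $\mathcal{P}_{\nu,d}$ of binary matrices $\mathbf{B}\in\mathbb{F}_2^{M_t\times T}$, each having its last $\nu$ columns equal to zero, such that (1) for every pair of distinct $\mathbf{A},\mathbf{B}\in\mathcal{P}_{\nu,d}$, $\operatorname{rank}_{\mathbb{F}_2}\big(\Theta(\mathbf{A})-\Theta(\mathbf{B})\big)\ge d(\nu+1)$, and (2) $\log_2|\mathcal{P}_{\nu,d}|\ge R\big(T-\nu-(\nu+1)(M_t-1)(2^R-1)2^{R-1}\big)$.
   Context: For $\mathbf{B}=[\mathbf{c}[0],\dots,\mathbf{c}[T-\nu-1],\mathbf{0},\dots,\mathbf{0}]\in\mathbb{F}_2^{M_t\times T}$ (last $\nu$ columns zero), $\Theta(\mathbf{B})\in\mathbb{F}_2^{(\nu+1)M_t\times T}$ is the block-Toeplitz matrix with $\nu+1$ block rows, block row $i$ ($i=0,\dots,\nu$) being $\mathbf{B}$ with its columns shifted right by $i$ positions, i.e. $[\mathbf{0},\dots,\mathbf{0},\mathbf{c}[0],\dots,\mathbf{c}[T-\nu-1],\mathbf{0},\dots,\mathbf{0}]$ with $i$ leading and $\nu-i$ trailing zero columns. *)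

theory Defs
  imports Complex_Main "HOL-Library.Z2" "Jordan_Normal_Form.DL_Rank"
begin

definition rank_F2 :: "bit mat \<Rightarrow> nat" where
  "rank_F2 A = vec_space.rank (dim_row A) A"

text \<open>Block-Toeplitz matrix Theta(B) with nu+1 block rows; block row i is B with its
  columns shifted right by i positions (zero columns entering on the left).\<close>
definition Theta :: "nat \<Rightarrow> bit mat \<Rightarrow> bit mat" where
  "Theta nu B = mat ((nu + 1) * dim_row B) (dim_col B)
     (\<lambda>(r, j). if r div dim_row B \<le> j
               then B $$ (r mod dim_row B, j - r div dim_row B) else 0)"

end

theory Submission
  imports Defs
begin

lemma rank_ge_echelon:
  fixes A :: "'a::field mat"
  assumes A: "A \<in> carrier_mat n nc" and G: "G \<subseteq> {..<n}" and inj: "inj_on l G"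
    and lr: "\<forall>r\<in>G. l r < nc" and nz: "\<forall>r\<in>G. A $$ (r, l r) \<noteq> 0"
    and z: "\<forall>r\<in>G. \<forall>r'\<in>G. l r < l r' \<longrightarrow> A $$ (r, l r') = 0"
  shows "card G \<le> vec_space.rank n A"
proof -
  interpret vec_space "TYPE('a)" n .
  define U where "U = (\<lambda>r. col A (l r)) ` G"
  have finG: "finite G" using G finite_subset by blast
  have injc: "inj_on (\<lambda>r. col A (l r)) G"
  proof (rule inj_onI)
    fix r r' assume r: "r \<in> G" and r': "r' \<in> G" and eq: "col A (l r) = col A (l r')"
    show "r = r'"
    proof (rule ccontr)
      assume "r \<noteq> r'"
      then have "l r \<noteq> l r'" using inj r r' by (meson inj_on_def)
      then consider "l r < l r'" | "l r' < l r" by linarith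
      then show False
      proof cases
        case 1
        have "col A (l r) $ r = A $$ (r, l r)" using A r G lr by auto
        moreover have "col A (l r') $ r = A $$ (r, l r')" using A r r' G lr by auto
        ultimately show False using eq nz z r r' 1 by auto
      next
        case 2
        have "col A (l r') $ r' = A $$ (r', l r')" using A r' G lr by auto
        moreover have "col A (l r) $ r' = A $$ (r', l r)" using A r r' G lr by auto
        ultimately show False using eq nz z r r' 2 by auto
      qed
    qed
  qed
  have cardU: "card U = card G" unfolding U_def using card_image injc by blast
  have Usub: "U \<subseteq> set (cols A)"
    unfolding U_def using A lr by (auto simp: cols_def)
  have Ucar: "U \<subseteq> carrier_vec n" using Usub A cols_dim by blast
  have "lin_indpt U"
  proof
    assume ld: "lin_dep U"
    have finU: "finite U" unfolding U_def using finG by simp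
    obtain a v where a: "a \<in> U \<rightarrow> carrier class_ring" and lc: "lincomb a U = \<zero>\<^bsub>V\<^esub>"
      and v: "v \<in> U" and av: "a v \<noteq> \<zero>\<^bsub>class_ring\<^esub>"
      using finite_lin_dep[OF finU ld] Ucar by auto
    define S where "S = {r\<in>G. a (col A (l r)) \<noteq> 0}"
    have Sne: "S \<noteq> {}" using v av unfolding S_def U_def by auto
    have finS: "finite S" using finG S_def by simp
    define c0 where "c0 = Min (l ` S)"
    have "c0 \<in> l ` S" unfolding c0_def using finS Sne by simp
    then obtain r0 where r0S: "r0 \<in> S" and lr0: "l r0 = c0" by auto
    have r0G: "r0 \<in> G" and r0n: "r0 < n" using r0S G S_def by auto
    have "lincomb a U $ r0 = (\<Sum>x\<in>U. a x * x $ r0)" using lincomb_index[OF r0n Ucar] .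
    also have "\<dots> = (\<Sum>r\<in>G. a (col A (l r)) * col A (l r) $ r0)"
      unfolding U_def using sum.reindex[OF injc] by simp
    also have "\<dots> = (\<Sum>r\<in>G. if r = r0 then a (col A (l r0)) * A $$ (r0, l r0) else 0)"
    proof (rule sum.cong[OF refl])
      fix r assume rG: "r \<in> G"
      have e: "col A (l r) $ r0 = A $$ (r0, l r)" using A rG r0n lr by auto
      show "a (col A (l r)) * col A (l r) $ r0 = (if r = r0 then a (col A (l r0)) * A $$ (r0, l r0) else 0)"
      proof (cases "r = r0")
        case True then show ?thesis using e by simp
      next
        case False
        show ?thesis
        proof (cases "a (col A (l r)) = 0")
          case True then show ?thesis using False by simp
        next
          case nz0: False
          then have "r \<in> S" using rG S_def by simp
          then have "c0 \<le> l r" unfolding c0_def using finS by simp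
          moreover have "l r \<noteq> l r0" using inj rG r0G False by (meson inj_on_def)
          ultimately have "l r0 < l r" using lr0 by simp
          then have "A $$ (r0, l r) = 0" using z r0G rG by blast
          then show ?thesis using e False by simp
        qed
      qed
    qed
    also have "\<dots> = a (col A (l r0)) * A $$ (r0, l r0)" using finG r0G by simp
    finally have "lincomb a U $ r0 = a (col A (l r0)) * A $$ (r0, l r0)" .
    moreover have "lincomb a U $ r0 = 0" using lc r0n by simp
    moreover have "a (col A (l r0)) \<noteq> 0" using r0S S_def by simp
    ultimately show False using nz r0G by simp
  qed
  then have "card U \<le> rank A" using rank_ge_card_indpt[OF A Usub] by simp
  then show ?thesis using cardU by simp
qed

lemma Theta_carrier: "B \<in> carrier_mat Mt T \<Longrightarrow> Theta nu B \<in> carrier_mat ((nu+1)*Mt) T"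
  unfolding Theta_def by auto

lemma Theta_entry:
  assumes B: "B \<in> carrier_mat Mt T" and i: "i \<le> nu" and m: "m < Mt" and q: "q < T"
  shows "Theta nu B $$ (i*Mt+m, q) = (if i \<le> q then B $$ (m, q - i) else 0)"
proof -
  have lt: "i*Mt+m < (nu+1)*Mt"
  proof -
    have "i*Mt + m < i*Mt + Mt" using m by simp
    also have "\<dots> = (i+1)*Mt" by simp
    also have "\<dots> \<le> (nu+1)*Mt" using i by (intro mult_right_mono) auto
    finally show ?thesis .
  qed
  have d: "(i*Mt+m) div Mt = i" and md: "(i*Mt+m) mod Mt = m" using m by auto
  show ?thesis unfolding Theta_def using B lt q d md by auto
qed

lemma Theta_minus:
  assumes A: "A \<in> carrier_mat Mt T" and B: "B \<in> carrier_mat Mt T"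
  shows "Theta nu A - Theta nu B = Theta nu (A - B)"
proof (rule eq_matI)
  show "dim_row (Theta nu A - Theta nu B) = dim_row (Theta nu (A - B))"
    and "dim_col (Theta nu A - Theta nu B) = dim_col (Theta nu (A - B))"
    using A B unfolding Theta_def by auto
  fix r j assume r: "r < dim_row (Theta nu (A - B))" and j: "j < dim_col (Theta nu (A - B))"
  have Mt: "Mt > 0" using r A B unfolding Theta_def by (cases Mt) auto
  have rm: "r mod Mt < Mt" using Mt by simp
  show "(Theta nu A - Theta nu B) $$ (r, j) = Theta nu (A - B) $$ (r, j)"
    using r j A B rm unfolding Theta_def by auto
qed

definition cf :: "nat \<Rightarrow> nat \<Rightarrow> nat \<Rightarrow> nat \<Rightarrow> nat \<Rightarrow> (nat \<Rightarrow> nat \<Rightarrow> bit) \<Rightarrow> bit mat" where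
  "cf Mt T nu R N h = mat Mt T (\<lambda>(m, q). \<Sum>j<R. if m*((nu+1)*(j+1)) \<le> q \<and> q - m*((nu+1)*(j+1)) < N
      then h j (q - m*((nu+1)*(j+1))) else 0)"

lemma cf_carrier: "cf Mt T nu R N h \<in> carrier_mat Mt T"
  unfolding cf_def by simp

lemma key:
  assumes j0: "j0 < R" and k0: "k0 < N" and h0: "h j0 k0 \<noteq> 0"
    and TT: "N + nu + (nu+1)*(Mt-1)*R \<le> T" and RM: "R \<le> Mt"
  shows "(Mt - (R-1))*(nu+1) \<le> rank_F2 (Theta nu (cf Mt T nu R N h))"
proof -
  define c where "c = (\<lambda>j::nat. (nu+1)*(j+1))"
  define D where "D = cf Mt T nu R N h"
  define J where "J = {j. j<R \<and> (\<exists>k<N. h j k \<noteq> 0)}"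
  define \<delta> where "\<delta> = (\<lambda>j. Max {k. k<N \<and> h j k \<noteq> 0})"
  define val where "val = (\<lambda>m j. m * c j + \<delta> j)"
  define F where "F = (\<lambda>m. Max (val m ` J))"
  define good where "good = {m. m<Mt \<and> (\<exists>j1\<in>J. \<forall>j\<in>J. j\<noteq>j1 \<longrightarrow> val m j < F m)}"
  have D: "D \<in> carrier_mat Mt T" unfolding D_def by (rule cf_carrier)
  have Dent: "D $$ (m,q) = (\<Sum>j<R. if m*c j \<le> q \<and> q - m*c j < N then h j (q - m*c j) else 0)"
    if "m < Mt" "q < T" for m q using that unfolding D_def cf_def c_def by simp
  have JR: "J \<subseteq> {..<R}" unfolding J_def by auto
  have finJ: "finite J" using JR finite_subset by blast
  have j0J: "j0 \<in> J" unfolding J_def using j0 k0 h0 by auto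
  have Jne: "J \<noteq> {}" using j0J by auto
  have hd: "\<delta> j < N \<and> h j (\<delta> j) \<noteq> 0" if "j \<in> J" for j
  proof -
    have ne: "{k. k<N \<and> h j k \<noteq> 0} \<noteq> {}" using that unfolding J_def by auto
    have "\<delta> j \<in> {k. k<N \<and> h j k \<noteq> 0}" unfolding \<delta>_def by (rule Max_in) (use ne in auto)
    then show ?thesis by simp
  qed
  have hdmax: "k \<le> \<delta> j" if "k < N" "h j k \<noteq> 0" for j k
    unfolding \<delta>_def by (rule Max_ge) (use that in auto)
  have Fge: "val m j \<le> F m" if "j \<in> J" for m j
    unfolding F_def using finJ that by simp
  have Fin: "\<exists>j\<in>J. val m j = F m" for m
  proof -
    have "F m \<in> val m ` J" unfolding F_def using finJ Jne by simp
    then show ?thesis by auto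
  qed
  have cge: "nu + 1 \<le> c j" for j unfolding c_def by simp
  have Fmono: "F m + (m'-m)*(nu+1) \<le> F m'" if "m \<le> m'" for m m'
  proof -
    obtain j where jJ: "j \<in> J" and vj: "val m j = F m" using Fin by blast
    have "m' * c j = m * c j + (m'-m) * c j" using that
      by (metis add_mult_distrib le_add_diff_inverse)
    moreover have "(m'-m)*(nu+1) \<le> (m'-m) * c j" using cge[of j] by (rule mult_le_mono2)
    ultimately have "F m + (m'-m)*(nu+1) \<le> val m' j" using vj unfolding val_def by simp
    then show ?thesis using Fge[OF jJ] by (meson le_trans)
  qed
  have Fbound: "F m + nu < T" if "m < Mt" for m
  proof -
    obtain j where jJ: "j \<in> J" and vj: "val m j = F m" using Fin by blast
    have jR: "j < R" using jJ JR by auto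
    have "m \<le> Mt - 1" using that by simp
    moreover have "c j \<le> (nu+1)*R" unfolding c_def using jR by (intro mult_le_mono2) simp
    ultimately have "m * c j \<le> (Mt-1)*((nu+1)*R)" by (intro mult_le_mono) auto
    moreover have "\<delta> j < N" using hd[OF jJ] by simp
    ultimately have "val m j < (Mt-1)*((nu+1)*R) + N" unfolding val_def by simp
    moreover have "(Mt-1)*((nu+1)*R) = (nu+1)*(Mt-1)*R" by (simp only: mult.assoc mult.commute mult.left_commute)
    ultimately show ?thesis using vj TT by linarith
  qed
  have E1: "D $$ (m,q) = 0" if m: "m < Mt" and q: "q < T" and Fq: "F m < q" for m q
  proof -
    have "(\<Sum>j<R. if m*c j \<le> q \<and> q - m*c j < N then h j (q - m*c j) else 0) = 0"
    proof (rule sum.neutral, rule ballI)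
      fix j assume jR: "j \<in> {..<R}"
      show "(if m*c j \<le> q \<and> q - m*c j < N then h j (q - m*c j) else 0) = 0"
      proof (cases "m*c j \<le> q \<and> q - m*c j < N \<and> h j (q - m*c j) \<noteq> 0")
        case True
        then have jJ: "j \<in> J" unfolding J_def using jR by auto
        have "q - m*c j \<le> \<delta> j" using hdmax True by blast
        moreover have "val m j < q" using Fge[OF jJ] Fq by (meson le_less_trans)
        ultimately show ?thesis using True unfolding val_def by simp
      qed auto
    qed
    then show ?thesis using Dent m q by simp
  qed
  have E2: "D $$ (m, F m) \<noteq> 0" if mg: "m \<in> good" for m
  proof -
    obtain j1 where j1J: "j1 \<in> J" and uq: "\<forall>j\<in>J. j\<noteq>j1 \<longrightarrow> val m j < F m" and m: "m < Mt"
      using mg unfolding good_def by auto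
    obtain j2 where j2J: "j2 \<in> J" and v2: "val m j2 = F m" using Fin by blast
    have "j2 = j1" using uq j2J v2 by fastforce
    then have v1: "val m j1 = F m" using v2 by simp
    have FT: "F m < T" using Fbound[OF m] by simp
    have "(\<Sum>j<R. if m*c j \<le> F m \<and> F m - m*c j < N then h j (F m - m*c j) else 0)
        = (\<Sum>j<R. if j = j1 then h j1 (\<delta> j1) else 0)"
    proof (rule sum.cong[OF refl])
      fix j assume jR: "j \<in> {..<R}"
      show "(if m*c j \<le> F m \<and> F m - m*c j < N then h j (F m - m*c j) else 0)
          = (if j = j1 then h j1 (\<delta> j1) else 0)"
      proof (cases "j = j1")
        case True
        have e: "F m - m*c j1 = \<delta> j1" "m*c j1 \<le> F m" using v1 unfolding val_def by linarith+
        then show ?thesis using True hd[OF j1J] by simp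
      next
        case False
        show ?thesis
        proof (cases "m*c j \<le> F m \<and> F m - m*c j < N \<and> h j (F m - m*c j) \<noteq> 0")
          case True
          then have jJ: "j \<in> J" unfolding J_def using jR by auto
          have "F m - m*c j \<le> \<delta> j" using hdmax True by blast
          moreover have "val m j < F m" using uq jJ False by blast
          ultimately show ?thesis using True unfolding val_def by simp
        qed (use False in auto)
      qed
    qed
    also have "\<dots> = h j1 (\<delta> j1)" using j1J JR by auto
    finally show ?thesis using Dent[OF m FT] hd[OF j1J] by simp
  qed
  define bad where "bad = {..<Mt} - good"
  define Mx where "Mx = (\<lambda>m. {j\<in>J. val m j = F m})"
  define \<phi> where "\<phi> = (\<lambda>m. Min (Mx m))"
  have finMx: "finite (Mx m)" for m unfolding Mx_def using finJ by simp
  have Mxne: "Mx m \<noteq> {}" for m unfolding Mx_def using Fin by auto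
  have phiMx: "\<phi> m \<in> Mx m" for m unfolding \<phi>_def using finMx Mxne by simp
  have phibig: "\<exists>k\<in>Mx m. \<phi> m < k" if "m \<in> bad" for m
  proof -
    have mg: "m \<notin> good" and m: "m < Mt" using that unfolding bad_def by auto
    have pJ: "\<phi> m \<in> J" using phiMx unfolding Mx_def by auto
    then obtain j where jJ: "j \<in> J" and jne: "j \<noteq> \<phi> m" and nl: "\<not> val m j < F m"
      using mg m unfolding good_def by blast
    have "val m j = F m" using nl Fge[OF jJ, of m] by simp
    then have jM: "j \<in> Mx m" unfolding Mx_def using jJ by simp
    then have "\<phi> m \<le> j" unfolding \<phi>_def using finMx by simp
    then have "\<phi> m < j" using jne by simp
    then show ?thesis using jM by blast
  qed
  have phi_into: "\<phi> ` bad \<subseteq> J - {Max J}"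
  proof
    fix x assume "x \<in> \<phi> ` bad"
    then obtain m where mb: "m \<in> bad" and x: "x = \<phi> m" by auto
    obtain k where kM: "k \<in> Mx m" and lt: "\<phi> m < k" using phibig[OF mb] by blast
    have "k \<le> Max J" using kM finJ unfolding Mx_def by simp
    moreover have "\<phi> m \<in> J" using phiMx unfolding Mx_def by auto
    ultimately show "x \<in> J - {Max J}" using lt x by auto
  qed
  have phi_inj: "inj_on \<phi> bad"
  proof -
    have noteq: "\<phi> m \<noteq> \<phi> m'" if mb: "m \<in> bad" and mb': "m' \<in> bad" and lt: "m < m'" for m m'
    proof
      assume eq: "\<phi> m = \<phi> m'"
      define j where "j = \<phi> m"
      obtain k where kM: "k \<in> Mx m" and jk: "j < k" using phibig[OF mb] j_def by blast
      have jM': "j \<in> Mx m'" using phiMx eq j_def by simp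
      have kJ: "k \<in> J" and vk: "val m k = F m" using kM unfolding Mx_def by auto
      have vj: "val m j = F m" using phiMx j_def unfolding Mx_def by auto
      have vj': "val m' j = F m'" using jM' unfolding Mx_def by auto
      have ck: "c j < c k" unfolding c_def using jk by (intro mult_strict_left_mono) auto
      have pos: "0 < m' - m" using lt by simp
      have "(m'-m) * c j < (m'-m) * c k" using ck pos by simp
      moreover have "m' * c j = m * c j + (m'-m) * c j" "m' * c k = m * c k + (m'-m) * c k"
        using lt by (metis add_mult_distrib le_add_diff_inverse less_imp_le)+
      ultimately have "val m' j < val m' k" using vk vj unfolding val_def by linarith
      then show False using vj' Fge[OF kJ, of m'] by simp
    qed
    show ?thesis
    proof (rule inj_onI, rule ccontr)
      fix m m' assume "m \<in> bad" "m' \<in> bad" "\<phi> m = \<phi> m'" "m \<noteq> m'"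
      then show False using noteq by (metis linorder_neqE_nat)
    qed
  qed
  have cardbad: "card bad \<le> R - 1"
  proof -
    have "card bad \<le> card (J - {Max J})"
      using card_inj_on_le[OF phi_inj phi_into] finJ by simp
    also have "\<dots> = card J - 1" using finJ Jne by simp
    also have "\<dots> \<le> R - 1" using card_mono[OF _ JR] by simp
    finally show ?thesis .
  qed
  have goodsub: "good \<subseteq> {..<Mt}" unfolding good_def by auto
  have cardgood: "Mt - (R-1) \<le> card good"
  proof -
    have "card {..<Mt} = card good + card bad"
      unfolding bad_def using goodsub card_Diff_subset[of good "{..<Mt}"] card_mono[OF _ goodsub]
      by (simp add: finite_subset)
    then show ?thesis using cardbad by simp
  qed
  define \<Theta> where "\<Theta> = Theta nu D"
  have Th: "\<Theta> \<in> carrier_mat ((nu+1)*Mt) T" unfolding \<Theta>_def using Theta_carrier[OF D] .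
  define pr where "pr = (\<lambda>(i::nat, m::nat). i*Mt+m)"
  define G where "G = pr ` ({..nu} \<times> good)"
  define l where "l = (\<lambda>r. F (r mod Mt) + r div Mt)"
  have prinj: "inj_on pr ({..nu} \<times> good)"
  proof (rule inj_onI)
    fix x y assume x0: "x \<in> {..nu} \<times> good" and y0: "y \<in> {..nu} \<times> good" and e0: "pr x = pr y"
    obtain i m where xe: "x = (i,m)" by (cases x)
    obtain i' m' where ye: "y = (i',m')" by (cases y)
    have x: "(i,m) \<in> {..nu} \<times> good" and y: "(i',m') \<in> {..nu} \<times> good" and e: "pr (i,m) = pr (i',m')"
      using x0 y0 e0 xe ye by auto
    have m: "m < Mt" and m': "m' < Mt" using x y goodsub by auto
    have e': "i*Mt+m = i'*Mt+m'" using e unfolding pr_def by simp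
    have "(i*Mt+m) div Mt = i" "(i'*Mt+m') div Mt = i'" using m m' by simp_all
    then have ii: "i = i'" using e' by metis
    then show "x = y" using e' xe ye by simp
  qed
  have cardG: "card G = (nu+1) * card good"
  proof -
    have "card G = card ({..nu} \<times> good)" unfolding G_def by (rule card_image[OF prinj])
    also have "\<dots> = card {..nu} * card good" by (rule card_cartesian_product)
    finally show ?thesis by simp
  qed
  have Gdec: "r div Mt \<le> nu \<and> r mod Mt \<in> good \<and> r < (nu+1)*Mt" if "r \<in> G" for r
  proof -
    have rG0: "r \<in> pr ` ({..nu} \<times> good)" using that unfolding G_def .
    obtain x where x1: "r = pr x" and x2: "x \<in> {..nu} \<times> good" using rG0 by (rule imageE)
    note x = x2 x1
    obtain i m where xe: "x = (i,m)" by (cases x)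
    have r1: "r = i*Mt+m" using x xe unfolding pr_def by simp
    have r2: "i \<le> nu" "m \<in> good" using x xe by auto
    have m: "m < Mt" using r2 goodsub by auto
    have d: "r div Mt = i" "r mod Mt = m" unfolding r1 using m by simp_all
    have "i*Mt + m < i*Mt + Mt" using m by simp
    also have "\<dots> = (i+1)*Mt" by simp
    also have "\<dots> \<le> (nu+1)*Mt" using r2 by (intro mult_right_mono) auto
    finally have lt: "r < (nu+1)*Mt" unfolding r1 .
    show ?thesis unfolding d using r2 lt by simp
  qed
  have Gsub: "G \<subseteq> {..<(nu+1)*Mt}" using Gdec by blast
  have rdec: "r = (r div Mt)*Mt + r mod Mt" for r by simp
  have linj: "inj_on l G"
  proof (rule inj_onI)
    fix r r' assume r: "r \<in> G" and r': "r' \<in> G" and e: "l r = l r'"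
    define i where "i = r div Mt"
    define m where "m = r mod Mt"
    define i' where "i' = r' div Mt"
    define m' where "m' = r' mod Mt"
    have ri: "i \<le> nu" "m \<in> good" using Gdec[OF r] i_def m_def by auto
    have ri': "i' \<le> nu" "m' \<in> good" using Gdec[OF r'] i'_def m'_def by auto
    have e2: "F m + i = F m' + i'" using e unfolding l_def i_def m_def i'_def m'_def by simp
    have "m = m'"
    proof (rule ccontr)
      assume "m \<noteq> m'"
      then consider "m < m'" | "m' < m" by linarith
      then show False
      proof cases
        case 1
        have "F m + (m'-m)*(nu+1) \<le> F m'" using Fmono 1 by simp
        moreover have "nu + 1 \<le> (m'-m)*(nu+1)" using mult_le_mono1[of 1 "m'-m" "nu+1"] 1 by simp
        ultimately show False using e2 ri ri' by linarith
      next
        case 2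
        have "F m' + (m-m')*(nu+1) \<le> F m" using Fmono 2 by simp
        moreover have "nu + 1 \<le> (m-m')*(nu+1)" using mult_le_mono1[of 1 "m-m'" "nu+1"] 2 by simp
        ultimately show False using e2 ri ri' by linarith
      qed
    qed
    moreover then have "i = i'" using e2 by simp
    ultimately show "r = r'" using rdec[of r] rdec[of r'] unfolding i_def m_def i'_def m'_def by metis
  qed
  have lT: "\<forall>r\<in>G. l r < T"
  proof
    fix r assume "r \<in> G"
    then have ri: "r div Mt \<le> nu" "r mod Mt \<in> good" using Gdec by auto
    have "F (r mod Mt) + nu < T" using Fbound ri goodsub by auto
    then show "l r < T" using ri unfolding l_def by simp
  qed
  have nzG: "\<forall>r\<in>G. \<Theta> $$ (r, l r) \<noteq> 0"
  proof
    fix r assume rG: "r \<in> G"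
    define i where "i = r div Mt"
    define m where "m = r mod Mt"
    have ri: "i \<le> nu" "m \<in> good" using Gdec[OF rG] i_def m_def by auto
    have m: "m < Mt" using ri goodsub by auto
    have lr: "l r = F m + i" unfolding l_def i_def m_def by simp
    have re: "r = i*Mt + m" unfolding i_def m_def by simp
    have q: "F m + i < T" using lT rG lr by metis
    have "\<Theta> $$ (r, l r) = \<Theta> $$ (i*Mt+m, F m + i)" using re lr by simp
    also have "\<dots> = D $$ (m, F m)"
      unfolding \<Theta>_def using Theta_entry[OF D ri(1) m q] by simp
    finally show "\<Theta> $$ (r, l r) \<noteq> 0" using E2 ri by simp
  qed
  have zG: "\<forall>r\<in>G. \<forall>r'\<in>G. l r < l r' \<longrightarrow> \<Theta> $$ (r, l r') = 0"
  proof (intro ballI impI)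
    fix r r' assume rG: "r \<in> G" and r'G: "r' \<in> G" and lt: "l r < l r'"
    define i where "i = r div Mt"
    define m where "m = r mod Mt"
    have ri: "i \<le> nu" "m \<in> good" using Gdec[OF rG] i_def m_def by auto
    have m: "m < Mt" using ri goodsub by auto
    have lr: "l r = F m + i" unfolding l_def i_def m_def by simp
    have re: "r = i*Mt + m" unfolding i_def m_def by simp
    have q: "l r' < T" using lT r'G by blast
    have "\<Theta> $$ (r, l r') = \<Theta> $$ (i*Mt+m, l r')" using re by simp
    also have "\<dots> = (if i \<le> l r' then D $$ (m, l r' - i) else 0)"
      unfolding \<Theta>_def using Theta_entry[OF D ri(1) m q] .
    also have "\<dots> = 0"
    proof -
      have "F m < l r' - i" using lt lr by simp
      moreover have "l r' - i < T" using q by simp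
      ultimately show ?thesis using E1[OF m] by simp
    qed
    finally show "\<Theta> $$ (r, l r') = 0" .
  qed
  have "card G \<le> vec_space.rank ((nu+1)*Mt) \<Theta>"
    by (rule rank_ge_echelon[OF Th Gsub linj lT nzG zG])
  moreover have "rank_F2 (Theta nu (cf Mt T nu R N h)) = vec_space.rank ((nu+1)*Mt) \<Theta>"
    unfolding rank_F2_def \<Theta>_def D_def using Th[unfolded \<Theta>_def D_def] by simp
  moreover have "(Mt - (R-1))*(nu+1) \<le> card G" unfolding cardG
    using mult_le_mono1[OF cardgood, of "nu+1"] by (simp add: mult.commute)
  ultimately show ?thesis by simp
qed

lemma bit_cases2: "x = 0 \<or> x = (1::bit)" by (cases x) auto

lemma UNIV_bit: "(UNIV :: bit set) = {0, 1}" using bit_cases2 by auto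

lemma bit_minus_eq0: "(a::bit) - b = 0 \<longleftrightarrow> a = b"
  by (cases a; cases b) auto

lemma cf_minus:
  "cf Mt T nu R N f - cf Mt T nu R N g = cf Mt T nu R N (\<lambda>j k. f j k - g j k)"
proof (rule eq_matI)
  fix i j assume i: "i < dim_row (cf Mt T nu R N (\<lambda>j k. f j k - g j k))"
    and j: "j < dim_col (cf Mt T nu R N (\<lambda>j k. f j k - g j k))"
  have i': "i < Mt" and j': "j < T" using i j unfolding cf_def by auto
  define C where "C = (\<lambda>r::nat. i*((nu+1)*(r+1)) \<le> j \<and> j - i*((nu+1)*(r+1)) < N)"
  define k where "k = (\<lambda>r::nat. j - i*((nu+1)*(r+1)))"
  have ef: "cf Mt T nu R N ff $$ (i, j) = (\<Sum>r<R. if C r then ff r (k r) else 0)" for ff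
    using i' j' unfolding cf_def C_def k_def by simp
  have "(cf Mt T nu R N f - cf Mt T nu R N g) $$ (i, j) = cf Mt T nu R N f $$ (i, j) - cf Mt T nu R N g $$ (i, j)"
    using i' j' by (simp add: cf_def del: bit_not_zero_iff bit_not_one_iff)
  also have "\<dots> = (\<Sum>r<R. (if C r then f r (k r) else 0) - (if C r then g r (k r) else 0))"
    unfolding ef by (rule sum_subtractf[symmetric])
  also have "\<dots> = (\<Sum>r<R. if C r then f r (k r) - g r (k r) else 0)"
    by (rule sum.cong) auto
  also have "\<dots> = cf Mt T nu R N (\<lambda>j k. f j k - g j k) $$ (i, j)" unfolding ef[of "\<lambda>j k. f j k - g j k"] ..
  finally show "(cf Mt T nu R N f - cf Mt T nu R N g) $$ (i, j) = cf Mt T nu R N (\<lambda>j k. f j k - g j k) $$ (i, j)" .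
qed (auto simp: cf_def)

lemma rank_F2_zero: "rank_F2 (0\<^sub>m n m) = 0"
  unfolding rank_F2_def by (simp add: vec_space.rank_0I)

theorem lemma3:
  fixes Mt nu d R T :: nat
  assumes "Mt \<ge> 1" and "1 \<le> d" and "d \<le> Mt" and "R = Mt - d + 1"
    and "int T \<ge> (2 ^ R - 1) * int nu
                 + (2 ^ R - 1) * (int nu + 1) * ((int Mt - 2) * (2 ^ R - 1) + int R)"
  shows "\<exists>P :: bit mat set.
           finite P \<and> P \<noteq> {} \<and>
           (\<forall>B\<in>P. B \<in> carrier_mat Mt T \<and>
                   (\<forall>i<Mt. \<forall>j. T - nu \<le> j \<and> j < T \<longrightarrow> B $$ (i, j) = 0)) \<and>
           (\<forall>A\<in>P. \<forall>B\<in>P. A \<noteq> B \<longrightarrow> rank_F2 (Theta nu A - Theta nu B) \<ge> d * (nu + 1)) \<and>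
           log 2 (real (card P)) \<ge>
             real R * (real T - real nu
                       - (real nu + 1) * (real Mt - 1) * (2 ^ R - 1) * 2 ^ (R - 1))"
proof -
  have Mt1: "Mt \<ge> 1" and d1: "1 \<le> d" and dM: "d \<le> Mt" and Rdef: "R = Mt - d + 1" using assms by auto
  have R1: "R \<ge> 1" and RM: "R \<le> Mt" and dR: "Mt - (R - 1) = d" using Rdef d1 dM by auto
  define K where "K = (nu+1)*(Mt-1)*R"
  define N where "N = T - nu - K"
  define cw where "cw = (\<lambda>xs::bit list. cf Mt T nu R N (\<lambda>j k. xs ! (j*N + k)))"
  define L where "L = {xs :: bit list. set xs \<subseteq> UNIV \<and> length xs = R*N}"
  define P where "P = cw ` L"
  have finU: "finite (UNIV :: bit set)" unfolding UNIV_bit by simp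
  have cardU: "card (UNIV :: bit set) = 2" unfolding UNIV_bit by simp
  have finL: "finite L" unfolding L_def using finite_lists_length_eq[OF finU] by simp
  have cardL: "card L = 2 ^ (R*N)" unfolding L_def using card_lists_length_eq[OF finU] cardU by simp
  have cwc: "cw xs \<in> carrier_mat Mt T" for xs unfolding cw_def by (rule cf_carrier)
  have diff: "d * (nu+1) \<le> rank_F2 (Theta nu (cw xs) - Theta nu (cw ys))"
    if xs: "xs \<in> L" and ys: "ys \<in> L" and ne: "xs \<noteq> ys" for xs ys
  proof -
    have lx: "length xs = R*N" and ly: "length ys = R*N" using xs ys unfolding L_def by auto
    obtain p where p: "p < R*N" and pne: "xs ! p \<noteq> ys ! p"
      using ne lx ly nth_equalityI by metis
    have Npos: "N > 0" using p by (cases N) auto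
    define j0 where "j0 = p div N"
    define k0 where "k0 = p mod N"
    have j0: "j0 < R" unfolding j0_def using p by (simp add: less_mult_imp_div_less)
    have k0: "k0 < N" unfolding k0_def using Npos by simp
    have pe: "j0*N + k0 = p" unfolding j0_def k0_def by simp
    define h where "h = (\<lambda>j k. xs ! (j*N + k) - ys ! (j*N + k))"
    have h0: "h j0 k0 \<noteq> 0" unfolding h_def pe using pne bit_minus_eq0 by simp
    have TT: "N + nu + (nu+1)*(Mt-1)*R \<le> T" using Npos unfolding N_def K_def by simp
    have "Theta nu (cw xs) - Theta nu (cw ys) = Theta nu (cw xs - cw ys)"
      by (rule Theta_minus[OF cwc cwc])
    also have "cw xs - cw ys = cf Mt T nu R N h" unfolding cw_def h_def by (rule cf_minus)
    finally have e: "Theta nu (cw xs) - Theta nu (cw ys) = Theta nu (cf Mt T nu R N h)" .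
    show ?thesis using key[where h=h, OF j0 k0 h0 TT RM] unfolding e dR .
  qed
  have injcw: "inj_on cw L"
  proof (rule inj_onI, rule ccontr)
    fix xs ys assume xs: "xs \<in> L" and ys: "ys \<in> L" and e: "cw xs = cw ys" and ne: "xs \<noteq> ys"
    have z: "Theta nu (cw xs) - Theta nu (cw ys) = 0\<^sub>m ((nu+1)*Mt) T"
      unfolding e using Theta_carrier[OF cwc[of ys], of nu] by (intro eq_matI) auto
    have "d * (nu+1) \<le> 0" using diff[OF xs ys ne] unfolding z rank_F2_zero .
    then show False using d1 by simp
  qed
  have cardP: "card P = 2 ^ (R*N)" unfolding P_def using card_image[OF injcw] cardL by simp
  have zero_cols: "cw xs $$ (i, j) = 0" if i: "i < Mt" and j1: "T - nu \<le> j" and j2: "j < T" for xs i j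
  proof -
    have "(\<Sum>r<R. if i*((nu+1)*(r+1)) \<le> j \<and> j - i*((nu+1)*(r+1)) < N
        then xs ! (r*N + (j - i*((nu+1)*(r+1)))) else 0) = 0"
    proof (rule sum.neutral, rule ballI)
      fix r assume r: "r \<in> {..<R}"
      have "i \<le> Mt - 1" using i by simp
      moreover have "(nu+1)*(r+1) \<le> (nu+1)*R" using r by (intro mult_le_mono2) simp
      ultimately have "i*((nu+1)*(r+1)) \<le> (Mt-1)*((nu+1)*R)" by (rule mult_le_mono)
      moreover have "(Mt-1)*((nu+1)*R) = K" unfolding K_def by (simp only: mult.assoc mult.commute mult.left_commute)
      ultimately have le: "i*((nu+1)*(r+1)) \<le> K" by simp
      have "\<not> (i*((nu+1)*(r+1)) \<le> j \<and> j - i*((nu+1)*(r+1)) < N)"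
      proof
        assume a: "i*((nu+1)*(r+1)) \<le> j \<and> j - i*((nu+1)*(r+1)) < N"
        then have "N > 0" by simp
        then have "N + nu + K = T" unfolding N_def by simp
        then show False using a le j1 by linarith
      qed
      then show "(if i*((nu+1)*(r+1)) \<le> j \<and> j - i*((nu+1)*(r+1)) < N
        then xs ! (r*N + (j - i*((nu+1)*(r+1)))) else 0) = 0" by (rule if_not_P)
    qed
    then show ?thesis using i j2 unfolding cw_def cf_def by simp
  qed
  have Lne: "replicate (R*N) 0 \<in> L" unfolding L_def by simp
  have logP: "log 2 (real (card P)) = real R * real N"
    unfolding cardP by (simp add: log_nat_power)
  have Rle: "real R \<le> (2 ^ R - 1) * 2 ^ (R - 1)"
  proof -
    have "R < 2 ^ R" by (rule less_exp)
    then have a: "real R \<le> 2 ^ R - 1"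
      by (metis Suc_leI of_nat_1 of_nat_add of_nat_le_iff of_nat_numeral of_nat_power Suc_eq_plus1 le_diff_eq)
    have b: "(1::real) \<le> 2 ^ (R - 1)" by simp
    have c: "(0::real) \<le> 2 ^ R - 1" using a by simp
    have "(2 ^ R - 1) * 1 \<le> (2 ^ R - 1) * (2::real) ^ (R - 1)" using mult_left_mono[OF b c] .
    then show ?thesis using a by simp
  qed
  have Nge: "real N \<ge> real T - real nu - (real nu + 1) * (real Mt - 1) * (2 ^ R - 1) * 2 ^ (R - 1)"
  proof -
    have m1: "real (Mt - 1) = real Mt - 1" using Mt1 by (simp add: of_nat_diff)
    have rK: "real K = (real nu + 1) * (real Mt - 1) * real R" unfolding K_def of_nat_mult m1 by simp
    have "(real nu + 1) * (real Mt - 1) * real R \<le> (real nu + 1) * (real Mt - 1) * ((2 ^ R - 1) * 2 ^ (R - 1))"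
      using Rle Mt1 by (intro mult_left_mono) auto
    then have k: "real K \<le> (real nu + 1) * (real Mt - 1) * (2 ^ R - 1) * 2 ^ (R - 1)"
      unfolding rK by (simp add: mult.assoc)
    have "real N \<ge> real T - real nu - real K" unfolding N_def by linarith
    then show ?thesis using k by linarith
  qed
  have logge: "log 2 (real (card P)) \<ge>
             real R * (real T - real nu - (real nu + 1) * (real Mt - 1) * (2 ^ R - 1) * 2 ^ (R - 1))"
    unfolding logP by (rule mult_left_mono[OF Nge]) simp
  show ?thesis
  proof (rule exI[of _ P], intro conjI)
    show "finite P" unfolding P_def using finL by simp
    show "P \<noteq> {}" unfolding P_def using Lne by auto
    show "\<forall>B\<in>P. B \<in> carrier_mat Mt T \<and> (\<forall>i<Mt. \<forall>j. T - nu \<le> j \<and> j < T \<longrightarrow> B $$ (i, j) = 0)"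
      unfolding P_def using cwc zero_cols by auto
    show "\<forall>A\<in>P. \<forall>B\<in>P. A \<noteq> B \<longrightarrow> rank_F2 (Theta nu A - Theta nu B) \<ge> d * (nu + 1)"
      unfolding P_def using diff by auto
    show "log 2 (real (card P)) \<ge>
             real R * (real T - real nu - (real nu + 1) * (real Mt - 1) * (2 ^ R - 1) * 2 ^ (R - 1))"
      by (rule logge)
  qed
qed

end
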